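(* Let $(M,J)$ be an almost complex manifold, $\nabla$ a connection on $M$ with torsion $T$, and $\widetilde\nabla=\nabla-\tfrac12T$. Then $J^{H,\nabla}=J^{G,\widetilde\nabla}$.
   Context: $J^{G,D}$ denotes the generalized horizontal lift associated with a connection $D$: $D$ induces a connection on $T^*M$ by $(D_Xs)(Y)=X(s(Y))-s(D_XY)$; for $\xi\in T^*_xM$, $H^D_\xi=\{d_xs(X): X\in T_xM,\ s(x)=\xi,\ D_Xs=0\}$, $T_\xi T^*M=H^D_\xi\oplus T^*_xM$, $v^D$ the projection onto $T^*_xM$ along $H^D_\xi$, and $J^{G,D}(X,v^D(Y))=(JX,{}^tJ(v^D(Y)))$ with $JX:=(d_\xi\pi|_{H^D_\xi})^{-1}(J(x)d_\xi\pi(X))$. The horizontal lift is $J^{H,\nabla}:=J^c+\gamma([\widetilde\nabla J])$, where $[\widetilde\nabla J](X,Y)=-(\widetilde\nabla J)(X,Y)+(\widetilde\nabla J)(Y,X)$, $(\widetilde\nabla J)(X,Y)=\widetilde\nabla_X(JY)-J\widetilde\nabla_XY$; $\gamma(R):=p_kR^k_{ij}dx^i\otimes\partial_{p_j}$ for $R=R^k_{ij}dx^i\otimes dx^j\otimes\partial_{x_k}$ (coordinates $(x,p)$ on $T^*M$); $J^c$ is defined by $d(p_kJ^k_ldx^l)=\omega_{st}(J^c\cdot,\cdot)$, $\omega_{st}=d(p_idx^i)$. *)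

theory Defs
  imports "HOL-Analysis.Analysis"
begin

text \<open>M is represented by an open set U of real^'n
(a coordinate chart), points of T*M by pairs (x,p) with p the covector
components p_k, and tangent vectors to T*M at (x,p) by pairs (X,P) meaning
X^i d/dx_i + P_j d/dp_j.  A connection is given by its Christoffel symbols
Gam x k i j = Gamma^k_ij, i.e. nabla_{d_i} d_j = Gamma^k_ij d_k.  An almost complex
structure J is a matrix field with J x $ k $ l = J^k_l.\<close>

fun Ck_on :: "nat \<Rightarrow> 'a::euclidean_space set \<Rightarrow> ('a \<Rightarrow> 'b::real_normed_vector) \<Rightarrow> bool" where
  "Ck_on 0 U f = continuous_on U f"
| "Ck_on (Suc k) U f =
     ((\<forall>x\<in>U. f differentiable (at x)) \<and>
      (\<forall>v. Ck_on k U (\<lambda>x. frechet_derivative f (at x) v)))"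

definition smooth_on :: "'a::euclidean_space set \<Rightarrow> ('a \<Rightarrow> 'b::real_normed_vector) \<Rightarrow> bool" where
  "smooth_on U f \<longleftrightarrow> (\<forall>k. Ck_on k U f)"

definition cov_vf :: "(real^'n \<Rightarrow> 'n \<Rightarrow> 'n \<Rightarrow> 'n \<Rightarrow> real) \<Rightarrow> real^'n \<Rightarrow> real^'n
     \<Rightarrow> (real^'n \<Rightarrow> real^'n) \<Rightarrow> real^'n" where
  "cov_vf Gam x X Y =
     (\<chi> k. frechet_derivative Y (at x) X $ k + (\<Sum>i\<in>UNIV. \<Sum>j\<in>UNIV. Gam x k i j * X $ i * Y x $ j))"

definition coordvf :: "'n::finite \<Rightarrow> real^'n \<Rightarrow> real^'n" where
  "coordvf i = (\<lambda>_. axis i 1)"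

text \<open>Torsion T(X,Y) = nabla_X Y - nabla_Y X - [X,Y], in components
T^k_ij = T(d_i,d_j)^k (coordinate fields commute, [d_i,d_j] = 0).\<close>
definition torsion :: "(real^'n \<Rightarrow> 'n \<Rightarrow> 'n \<Rightarrow> 'n \<Rightarrow> real) \<Rightarrow> real^'n \<Rightarrow> 'n \<Rightarrow> 'n \<Rightarrow> 'n::finite \<Rightarrow> real" where
  "torsion Gam x k i j =
     (cov_vf Gam x (axis i 1) (coordvf j) - cov_vf Gam x (axis j 1) (coordvf i)) $ k"

definition tilde_conn :: "(real^'n \<Rightarrow> 'n \<Rightarrow> 'n \<Rightarrow> 'n \<Rightarrow> real) \<Rightarrow> real^'n \<Rightarrow> 'n \<Rightarrow> 'n \<Rightarrow> 'n::finite \<Rightarrow> real" where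
  "tilde_conn Gam x k i j = Gam x k i j - (1/2) * torsion Gam x k i j"

text \<open>Induced connection on T*M: (D_X s)(Y) = X(s(Y)) - s(D_X Y), at the point x,
for a section s given by its covector field sg.\<close>
definition cov_form :: "(real^'n \<Rightarrow> 'n \<Rightarrow> 'n \<Rightarrow> 'n \<Rightarrow> real) \<Rightarrow> real^'n \<Rightarrow> real^'n
     \<Rightarrow> (real^'n \<Rightarrow> real^'n) \<Rightarrow> (real^'n \<Rightarrow> real^'n) \<Rightarrow> real" where
  "cov_form Gam x X sg Y =
     frechet_derivative (\<lambda>y. sg y \<bullet> Y y) (at x) X - sg x \<bullet> cov_vf Gam x X Y"

definition parallel_at :: "(real^'n \<Rightarrow> 'n \<Rightarrow> 'n \<Rightarrow> 'n \<Rightarrow> real) \<Rightarrow> (real^'n) set \<Rightarrow> real^'n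
     \<Rightarrow> real^'n \<Rightarrow> (real^'n \<Rightarrow> real^'n) \<Rightarrow> bool" where
  "parallel_at Gam U x X sg \<longleftrightarrow> (\<forall>Y. smooth_on U Y \<longrightarrow> cov_form Gam x X sg Y = 0)"

text \<open>H^D_xi = { d_x s(X) : s(x) = xi, D_X s = 0 }, xi = (x,p); s(y) = (y, sg y).\<close>
definition horiz :: "(real^'n \<Rightarrow> 'n \<Rightarrow> 'n \<Rightarrow> 'n \<Rightarrow> real) \<Rightarrow> (real^'n) set \<Rightarrow> real^'n \<Rightarrow> real^'n
     \<Rightarrow> ((real^'n) \<times> (real^'n)) set" where
  "horiz Gam U x p =
     {(X, frechet_derivative sg (at x) X) | X sg.
        smooth_on U sg \<and> sg x = p \<and> parallel_at Gam U x X sg}"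

text \<open>v^D: projection onto the vertical T*_xM = {(0,P)} along H^D (returns P).\<close>
definition vproj :: "(real^'n \<Rightarrow> 'n \<Rightarrow> 'n \<Rightarrow> 'n \<Rightarrow> real) \<Rightarrow> (real^'n) set \<Rightarrow> real^'n \<Rightarrow> real^'n
     \<Rightarrow> (real^'n) \<times> (real^'n) \<Rightarrow> real^'n" where
  "vproj Gam U x p V = (THE P. V - (0, P) \<in> horiz Gam U x p)"

text \<open>Inverse of d pi restricted to H^D_xi (d pi (X,P) = X).\<close>
definition hlift :: "(real^'n \<Rightarrow> 'n \<Rightarrow> 'n \<Rightarrow> 'n \<Rightarrow> real) \<Rightarrow> (real^'n) set \<Rightarrow> real^'n \<Rightarrow> real^'n
     \<Rightarrow> real^'n \<Rightarrow> (real^'n) \<times> (real^'n)" where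
  "hlift Gam U x p X = (THE h. h \<in> horiz Gam U x p \<and> fst h = X)"

definition JG :: "(real^'n \<Rightarrow> 'n \<Rightarrow> 'n \<Rightarrow> 'n \<Rightarrow> real) \<Rightarrow> (real^'n) set \<Rightarrow> (real^'n \<Rightarrow> real^'n^'n)
     \<Rightarrow> real^'n \<Rightarrow> real^'n \<Rightarrow> (real^'n) \<times> (real^'n) \<Rightarrow> (real^'n) \<times> (real^'n)" where
  "JG Gam U J x p V =
     (let v = vproj Gam U x p V; h = V - (0, v)
      in hlift Gam U x p (J x *v fst h) + (0, transpose (J x) *v v))"

definition nablaJ :: "(real^'n \<Rightarrow> 'n \<Rightarrow> 'n \<Rightarrow> 'n \<Rightarrow> real) \<Rightarrow> (real^'n \<Rightarrow> real^'n^'n)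
     \<Rightarrow> real^'n \<Rightarrow> 'n \<Rightarrow> 'n \<Rightarrow> 'n::finite \<Rightarrow> real" where
  "nablaJ Gam J x k i j =
     (cov_vf Gam x (axis i 1) (\<lambda>y. J y *v coordvf j y) - J x *v cov_vf Gam x (axis i 1) (coordvf j)) $ k"

definition bracketJ :: "(real^'n \<Rightarrow> 'n \<Rightarrow> 'n \<Rightarrow> 'n \<Rightarrow> real) \<Rightarrow> (real^'n \<Rightarrow> real^'n^'n)
     \<Rightarrow> real^'n \<Rightarrow> 'n \<Rightarrow> 'n \<Rightarrow> 'n::finite \<Rightarrow> real" where
  "bracketJ Gam J x k i j = - nablaJ Gam J x k i j + nablaJ Gam J x k j i"

text \<open>gamma(R) = p_k R^k_ij dx^i (x) d/dp_j, as an endomorphism of T_(x,p) T*M.\<close>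
definition gamma_op :: "('n \<Rightarrow> 'n \<Rightarrow> 'n::finite \<Rightarrow> real) \<Rightarrow> (real^'n) \<times> (real^'n)
     \<Rightarrow> (real^'n) \<times> (real^'n) \<Rightarrow> (real^'n) \<times> (real^'n)" where
  "gamma_op R z V = (0, \<chi> j. \<Sum>i\<in>UNIV. \<Sum>k\<in>UNIV. snd z $ k * R k i j * fst V $ i)"

text \<open>Exterior derivative of a 1-form alpha on T*M (coordinates z = (x,p)),
evaluated on constant-coefficient vectors V, W.\<close>
definition ext_d :: "((real^'n) \<times> (real^'n) \<Rightarrow> (real^'n) \<times> (real^'n) \<Rightarrow> real)
     \<Rightarrow> (real^'n) \<times> (real^'n) \<Rightarrow> (real^'n) \<times> (real^'n) \<Rightarrow> (real^'n) \<times> (real^'n) \<Rightarrow> real" where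
  "ext_d alpha z V W =
     frechet_derivative (\<lambda>z'. alpha z' W) (at z) V - frechet_derivative (\<lambda>z'. alpha z' V) (at z) W"

definition liouville :: "(real^'n) \<times> (real^'n) \<Rightarrow> (real^'n) \<times> (real^'n) \<Rightarrow> real" where
  "liouville z V = (\<Sum>i\<in>UNIV. snd z $ i * fst V $ i)"

definition liouvilleJ :: "(real^'n \<Rightarrow> real^'n^'n) \<Rightarrow> (real^'n) \<times> (real^'n) \<Rightarrow> (real^'n) \<times> (real^'n) \<Rightarrow> real" where
  "liouvilleJ J z V = (\<Sum>k\<in>UNIV. \<Sum>l\<in>UNIV. snd z $ k * J (fst z) $ k $ l * fst V $ l)"

definition omega_st :: "(real^'n) \<times> (real^'n) \<Rightarrow> (real^'n) \<times> (real^'n) \<Rightarrow> (real^'n) \<times> (real^'n) \<Rightarrow> real" where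
  "omega_st = ext_d liouville"

definition Jc :: "(real^'n \<Rightarrow> real^'n^'n) \<Rightarrow> (real^'n) \<times> (real^'n)
     \<Rightarrow> (real^'n) \<times> (real^'n) \<Rightarrow> (real^'n) \<times> (real^'n)" where
  "Jc J z = (THE A. \<forall>V W. ext_d (liouvilleJ J) z V W = omega_st z (A V) W)"

definition JH :: "(real^'n \<Rightarrow> 'n \<Rightarrow> 'n \<Rightarrow> 'n \<Rightarrow> real) \<Rightarrow> (real^'n \<Rightarrow> real^'n^'n)
     \<Rightarrow> (real^'n) \<times> (real^'n) \<Rightarrow> (real^'n) \<times> (real^'n) \<Rightarrow> (real^'n) \<times> (real^'n)" where
  "JH Gam J z V = Jc J z V + gamma_op (bracketJ (tilde_conn Gam) J (fst z)) z V"

end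

theory Submission
  imports Defs
begin

lemma Ck_const: "Ck_on k U (\<lambda>_. c)"
proof (induction k arbitrary: c)
  case 0 then show ?case by simp
next
  case (Suc k)
  have "\<And>x. frechet_derivative (\<lambda>_. c) (at x) = (\<lambda>_. 0)"
    using frechet_derivative_at[OF has_derivative_const] by metis
  then show ?case using Suc by simp
qed

lemma smooth_const: "smooth_on U (\<lambda>_. c)"
  unfolding smooth_on_def using Ck_const by blast

lemma smooth_affine:
  assumes L: "bounded_linear L"
  shows "smooth_on U (\<lambda>y. p + L (y - x))"
proof -
  have d: "((\<lambda>y. p + L (y - x)) has_derivative L) (at y)" for y
    by (auto intro!: derivative_eq_intros bounded_linear.has_derivative[OF L])
  have fd: "frechet_derivative (\<lambda>y. p + L (y - x)) (at y) = L" for y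
    using frechet_derivative_at[OF d] by metis
  have "Ck_on k U (\<lambda>y. p + L (y - x))" for k
  proof (cases k)
    case 0
    have "continuous_on U (\<lambda>y. p + L (y - x))"
      by (intro continuous_at_imp_continuous_on ballI has_derivative_continuous[OF d])
    then show ?thesis using 0 by simp
  next
    case (Suc m)
    then show ?thesis using d fd Ck_const by (auto simp: differentiable_def)
  qed
  then show ?thesis unfolding smooth_on_def by blast
qed

lemma smooth_diff:
  assumes "smooth_on U f" "x \<in> U"
  shows "f differentiable (at x)"
  using assms unfolding smooth_on_def by (metis Ck_on.simps(2))

definition gp :: "(real^'n \<Rightarrow> 'n \<Rightarrow> 'n \<Rightarrow> 'n \<Rightarrow> real) \<Rightarrow> real^'n \<Rightarrow> real^'n \<Rightarrow> real^'n \<Rightarrow> real^'n::finite" where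
  "gp Gam x p X = (\<chi> j. \<Sum>i\<in>UNIV. \<Sum>k\<in>UNIV. p$k * Gam x k i j * X$i)"

lemma gp_linear: "bounded_linear (gp Gam x p)"
proof -
  have "linear (gp Gam x p)"
    by (rule linearI) (simp_all add: gp_def vec_eq_iff algebra_simps sum.distrib sum_distrib_left)
  then show ?thesis by (simp add: linear_conv_bounded_linear)
qed

lemma cov_vf_const: "cov_vf Gam x X (\<lambda>_. c) = (\<chi> k. \<Sum>i\<in>UNIV. \<Sum>j\<in>UNIV. Gam x k i j * X $ i * c $ j)"
proof -
  have "frechet_derivative (\<lambda>_. c) (at x) = (\<lambda>_. 0)"
    using frechet_derivative_at[OF has_derivative_const] by metis
  then show ?thesis unfolding cov_vf_def by simp
qed

lemma sum3_swap: "(\<Sum>k\<in>A. \<Sum>i\<in>B. \<Sum>j\<in>C. f k i j) = (\<Sum>j\<in>C. \<Sum>i\<in>B. \<Sum>k\<in>A. f k i j)"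
proof -
  have "(\<Sum>k\<in>A. \<Sum>i\<in>B. \<Sum>j\<in>C. f k i j) = (\<Sum>k\<in>A. \<Sum>j\<in>C. \<Sum>i\<in>B. f k i j)"
    by (rule sum.cong[OF refl], rule sum.swap)
  also have "\<dots> = (\<Sum>j\<in>C. \<Sum>k\<in>A. \<Sum>i\<in>B. f k i j)" by (rule sum.swap)
  also have "\<dots> = (\<Sum>j\<in>C. \<Sum>i\<in>B. \<Sum>k\<in>A. f k i j)"
    by (rule sum.cong[OF refl], rule sum.swap)
  finally show ?thesis .
qed

lemma horiz_eq:
  fixes Gam :: "real^'n \<Rightarrow> 'n \<Rightarrow> 'n \<Rightarrow> 'n \<Rightarrow> real" and U :: "(real^'n) set"
  assumes U: "open U" "x \<in> U"
  shows "horiz Gam U x p = {(X, gp Gam x p X) | X. True}"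
proof (intro set_eqI iffI)
  fix h assume "h \<in> horiz Gam U x p"
  then obtain X sg where h: "h = (X, frechet_derivative sg (at x) X)" and sm: "smooth_on U sg"
    and sx: "sg x = p" and par: "parallel_at Gam U x X sg"
    unfolding horiz_def by blast
  have dsg: "(sg has_derivative frechet_derivative sg (at x)) (at x)"
    using smooth_diff[OF sm U(2)] frechet_derivative_works by blast
  have "frechet_derivative sg (at x) X $ j = gp Gam x p X $ j" for j
  proof -
    have "cov_form Gam x X sg (\<lambda>_. axis j 1) = 0"
      using par smooth_const unfolding parallel_at_def by blast
    moreover have "((\<lambda>y. sg y \<bullet> axis j 1) has_derivative (\<lambda>v. frechet_derivative sg (at x) v \<bullet> axis j 1)) (at x)"
      by (auto intro!: derivative_eq_intros dsg)
    then have "frechet_derivative (\<lambda>y. sg y \<bullet> axis j 1) (at x) = (\<lambda>v. frechet_derivative sg (at x) v \<bullet> axis j 1)"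
      by (rule frechet_derivative_at[symmetric])
    ultimately have "frechet_derivative sg (at x) X \<bullet> axis j 1 = p \<bullet> cov_vf Gam x X (\<lambda>_. axis j 1)"
      unfolding cov_form_def using sx by simp
    moreover have "p \<bullet> cov_vf Gam x X (\<lambda>_. axis j 1) = gp Gam x p X $ j"
    proof -
      have "cov_vf Gam x X (\<lambda>_. axis j 1) $ k = (\<Sum>i\<in>UNIV. Gam x k i j * X $ i)" for k
        unfolding cov_vf_const by (simp add: axis_def if_distrib[of "\<lambda>t. _ * t"] sum.delta' cong: if_cong)
      then have "p \<bullet> cov_vf Gam x X (\<lambda>_. axis j 1) = (\<Sum>k\<in>UNIV. \<Sum>i\<in>UNIV. p $ k * Gam x k i j * X $ i)"
        by (simp add: inner_vec_def sum_distrib_left mult.assoc)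
      also have "\<dots> = gp Gam x p X $ j" unfolding gp_def vec_lambda_beta by (rule sum.swap)
      finally show ?thesis .
    qed
    ultimately show ?thesis by (simp add: inner_axis)
  qed
  then have "frechet_derivative sg (at x) X = gp Gam x p X" by (simp add: vec_eq_iff)
  then show "h \<in> {(X, gp Gam x p X) | X. True}" using h by blast
next
  fix h assume "h \<in> {(X, gp Gam x p X) | X. True}"
  then obtain X where h: "h = (X, gp Gam x p X)" by blast
  define sg where "sg = (\<lambda>y. p + gp Gam x p (y - x))"
  have L: "bounded_linear (gp Gam x p)" by (rule gp_linear)
  have dsg: "(sg has_derivative gp Gam x p) (at y)" for y
    unfolding sg_def by (auto intro!: derivative_eq_intros bounded_linear.has_derivative[OF L])
  have fd: "frechet_derivative sg (at x) = gp Gam x p"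
    using frechet_derivative_at[OF dsg] by metis
  have sm: "smooth_on U sg" unfolding sg_def by (rule smooth_affine[OF L])
  have sx: "sg x = p" unfolding sg_def using linear_0[OF bounded_linear.linear[OF L]] by simp
  have "parallel_at Gam U x X sg"
    unfolding parallel_at_def
  proof (intro allI impI)
    fix Y :: "real^'n \<Rightarrow> real^'n" assume "smooth_on U Y"
    then have dY: "(Y has_derivative frechet_derivative Y (at x)) (at x)"
      using smooth_diff[OF _ U(2)] frechet_derivative_works by blast
    have "((\<lambda>y. sg y \<bullet> Y y) has_derivative (\<lambda>v. sg x \<bullet> frechet_derivative Y (at x) v + gp Gam x p v \<bullet> Y x)) (at x)"
      by (auto intro!: derivative_eq_intros dY dsg)
    then have "frechet_derivative (\<lambda>y. sg y \<bullet> Y y) (at x) = (\<lambda>v. sg x \<bullet> frechet_derivative Y (at x) v + gp Gam x p v \<bullet> Y x)"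
      by (rule frechet_derivative_at[symmetric])
    then have "frechet_derivative (\<lambda>y. sg y \<bullet> Y y) (at x) X = p \<bullet> frechet_derivative Y (at x) X + gp Gam x p X \<bullet> Y x"
      using sx by simp
    moreover have "p \<bullet> cov_vf Gam x X Y = p \<bullet> frechet_derivative Y (at x) X
        + (\<Sum>k\<in>UNIV. \<Sum>i\<in>UNIV. \<Sum>j\<in>UNIV. p $ k * Gam x k i j * X $ i * Y x $ j)"
      unfolding cov_vf_def by (simp add: inner_vec_def sum.distrib distrib_left sum_distrib_left mult.assoc)
    moreover have "gp Gam x p X \<bullet> Y x = (\<Sum>k\<in>UNIV. \<Sum>i\<in>UNIV. \<Sum>j\<in>UNIV. p $ k * Gam x k i j * X $ i * Y x $ j)"
    proof -
      have "gp Gam x p X \<bullet> Y x = (\<Sum>j\<in>UNIV. \<Sum>i\<in>UNIV. \<Sum>k\<in>UNIV. p $ k * Gam x k i j * X $ i * Y x $ j)"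
        unfolding gp_def by (simp add: inner_vec_def sum_distrib_right)
      also have "\<dots> = (\<Sum>k\<in>UNIV. \<Sum>i\<in>UNIV. \<Sum>j\<in>UNIV. p $ k * Gam x k i j * X $ i * Y x $ j)"
        by (rule sum3_swap[symmetric])
      finally show ?thesis .
    qed
    ultimately show "cov_form Gam x X sg Y = 0"
      unfolding cov_form_def sx by simp
  qed
  then show "h \<in> horiz Gam U x p" unfolding horiz_def h
    by (intro CollectI exI[of _ X] exI[of _ sg]) (simp add: sm sx fd)
qed

lemma vproj_eq:
  fixes Gam :: "real^'n \<Rightarrow> 'n \<Rightarrow> 'n \<Rightarrow> 'n \<Rightarrow> real" and U :: "(real^'n) set"
  assumes U: "open U" "x \<in> U"
  shows "vproj Gam U x p (X, P) = P - gp Gam x p X"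
  unfolding vproj_def horiz_eq[OF U]
proof (rule the_equality)
  fix P' assume "(X, P) - (0, P') \<in> {(X, gp Gam x p X) |X. True}"
  then have e: "P - P' = gp Gam x p X" by auto
  have "P' = P - (P - P')" by simp
  then show "P' = P - gp Gam x p X" using e by simp
qed simp

lemma hlift_eq:
  fixes Gam :: "real^'n \<Rightarrow> 'n \<Rightarrow> 'n \<Rightarrow> 'n \<Rightarrow> real" and U :: "(real^'n) set"
  assumes U: "open U" "x \<in> U"
  shows "hlift Gam U x p X = (X, gp Gam x p X)"
  unfolding hlift_def horiz_eq[OF U]
  by (rule the_equality) auto

lemma JG_eq:
  fixes Gam :: "real^'n \<Rightarrow> 'n \<Rightarrow> 'n \<Rightarrow> 'n \<Rightarrow> real" and U :: "(real^'n) set"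
  assumes U: "open U" "x \<in> U"
  shows "JG Gam U J x p (X, P) = (J x *v X, gp Gam x p (J x *v X) + transpose (J x) *v (P - gp Gam x p X))"
  unfolding JG_def Let_def vproj_eq[OF U] hlift_eq[OF U] by simp

lemma omega_eq: "omega_st z V W = snd V \<bullet> fst W - snd W \<bullet> fst V"
proof -
  have l: "liouville = (\<lambda>z W. snd z \<bullet> fst W)"
    by (intro ext) (simp add: liouville_def inner_vec_def)
  have "((\<lambda>z'. snd z' \<bullet> c) has_derivative (\<lambda>V. snd V \<bullet> c)) (at z)" for c :: "real^'a"
    by (auto intro!: derivative_eq_intros)
  then have "frechet_derivative (\<lambda>z'. snd z' \<bullet> c) (at z) = (\<lambda>V. snd V \<bullet> c)" for c :: "real^'a"
    by (rule frechet_derivative_at[symmetric])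
  then show ?thesis unfolding omega_st_def ext_d_def l by simp
qed

lemma omega_inj:
  assumes "\<forall>W. omega_st z Z W = omega_st z Z' W"
  shows "Z = Z'"
proof -
  have "omega_st z Z (snd Z - snd Z', 0) = omega_st z Z' (snd Z - snd Z', 0)" using assms by blast
  then have "(snd Z - snd Z') \<bullet> (snd Z - snd Z') = 0" by (simp add: omega_eq inner_diff_left)
  then have 1: "snd Z = snd Z'" by simp
  have "omega_st z Z (0, fst Z - fst Z') = omega_st z Z' (0, fst Z - fst Z')" using assms by blast
  then have "(fst Z - fst Z') \<bullet> (fst Z - fst Z') = 0" by (simp add: omega_eq inner_diff_right)
  then have 2: "fst Z = fst Z'" by simp
  show ?thesis using 1 2 by (simp add: prod_eq_iff)
qed

lemma bl_mv: "bounded_linear (\<lambda>M::real^'n^'m. M *v w)"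
proof -
  have "linear (\<lambda>M::real^'n^'m. M *v w)"
    by (rule linearI) (simp_all add: matrix_vector_mult_def vec_eq_iff sum.distrib sum_distrib_left algebra_simps)
  then show ?thesis by (simp add: linear_conv_bounded_linear)
qed

lemma sum3_rot: "(\<Sum>l\<in>A. \<Sum>k\<in>B. \<Sum>i\<in>C. f l k i) = (\<Sum>k\<in>B. \<Sum>i\<in>C. \<Sum>l\<in>A. f l k i)"
proof -
  have "(\<Sum>l\<in>A. \<Sum>k\<in>B. \<Sum>i\<in>C. f l k i) = (\<Sum>k\<in>B. \<Sum>l\<in>A. \<Sum>i\<in>C. f l k i)" by (rule sum.swap)
  also have "\<dots> = (\<Sum>k\<in>B. \<Sum>i\<in>C. \<Sum>l\<in>A. f l k i)" by (rule sum.cong[OF refl], rule sum.swap)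
  finally show ?thesis .
qed

lemma S1: "(transpose M *v a) \<bullet> w = a \<bullet> (M *v (w::real^'n))" for M :: "real^'n^'m"
proof -
  have "(transpose M *v a) \<bullet> w = (\<Sum>i\<in>UNIV. \<Sum>j\<in>UNIV. a $ j * M $ j $ i * w $ i)"
    by (simp add: inner_vec_def matrix_vector_mult_def transpose_def sum_distrib_right sum_distrib_left mult_ac)
  also have "\<dots> = (\<Sum>j\<in>UNIV. \<Sum>i\<in>UNIV. a $ j * M $ j $ i * w $ i)" by (rule sum.swap)
  also have "\<dots> = a \<bullet> (M *v w)"
    by (simp add: inner_vec_def matrix_vector_mult_def sum_distrib_left mult_ac)
  finally show ?thesis .
qed

lemma S2: "(\<chi> l. \<Sum>k\<in>UNIV. p $ k * D $ k $ l) \<bullet> w = p \<bullet> (D *v (w::real^'n))" for D :: "real^'n^'m"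
proof -
  have "(\<chi> l. \<Sum>k\<in>UNIV. p $ k * D $ k $ l) \<bullet> w = (\<Sum>i\<in>UNIV. \<Sum>j\<in>UNIV. p $ j * D $ j $ i * w $ i)"
    by (simp add: inner_vec_def sum_distrib_right sum_distrib_left mult_ac)
  also have "\<dots> = (\<Sum>j\<in>UNIV. \<Sum>i\<in>UNIV. p $ j * D $ j $ i * w $ i)" by (rule sum.swap)
  also have "\<dots> = p \<bullet> (D *v w)"
    by (simp add: inner_vec_def matrix_vector_mult_def sum_distrib_left mult_ac)
  finally show ?thesis .
qed

lemma lin_expand:
  assumes "bounded_linear (DJ :: real^'n \<Rightarrow> real^'n^'m)"
  shows "DJ w $ k $ i = (\<Sum>l\<in>UNIV. w $ l * DJ (axis l 1) $ k $ i)"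
proof -
  have L: "linear DJ" using assms bounded_linear.linear by blast
  have "DJ w = DJ (\<Sum>l\<in>UNIV. w $ l *s axis l 1)" by (simp add: basis_expansion)
  also have "\<dots> = (\<Sum>l\<in>UNIV. w $ l *\<^sub>R DJ (axis l 1))"
    by (simp add: scalar_mult_eq_scaleR linear_sum[OF L] linear_scale[OF L])
  finally show ?thesis by simp
qed

lemma S3:
  assumes "bounded_linear (DJ :: real^'n \<Rightarrow> real^'n^'m)"
  shows "(\<chi> l. \<Sum>k\<in>UNIV. p $ k * (\<Sum>i\<in>UNIV. DJ (axis l 1) $ k $ i * v $ i)) \<bullet> w = p \<bullet> (DJ w *v v)"
proof -
  have "(\<chi> l. \<Sum>k\<in>UNIV. p $ k * (\<Sum>i\<in>UNIV. DJ (axis l 1) $ k $ i * v $ i)) \<bullet> w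
      = (\<Sum>l\<in>UNIV. \<Sum>k\<in>UNIV. \<Sum>i\<in>UNIV. p $ k * DJ (axis l 1) $ k $ i * v $ i * w $ l)"
    by (simp add: inner_vec_def sum_distrib_right sum_distrib_left mult_ac)
  also have "\<dots> = (\<Sum>k\<in>UNIV. \<Sum>i\<in>UNIV. \<Sum>l\<in>UNIV. p $ k * DJ (axis l 1) $ k $ i * v $ i * w $ l)"
    by (rule sum3_rot)
  also have "\<dots> = p \<bullet> (DJ w *v v)"
    by (simp add: inner_vec_def matrix_vector_mult_def lin_expand[OF assms, of w] sum_distrib_left sum_distrib_right mult_ac)
  finally show ?thesis .
qed

definition cJ :: "(real^'n \<Rightarrow> real^'n^'n) \<Rightarrow> (real^'n \<Rightarrow> real^'n^'n) \<Rightarrow> real^'n \<Rightarrow> real^'n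
    \<Rightarrow> (real^'n) \<times> (real^'n) \<Rightarrow> real^'n::finite" where
  "cJ J DJ x p V = transpose (J x) *v snd V
     + (\<chi> l. \<Sum>k\<in>UNIV. p $ k * DJ (fst V) $ k $ l)
     - (\<chi> l. \<Sum>k\<in>UNIV. p $ k * (\<Sum>i\<in>UNIV. DJ (axis l 1) $ k $ i * fst V $ i))"

lemma Jc_eq:
  fixes J :: "real^'n \<Rightarrow> real^'n^'n"
  assumes dJ: "(J has_derivative DJ) (at x)"
  shows "Jc J (x, p) V = (J x *v fst V, cJ J DJ x p V)"
proof -
  have bl: "bounded_linear DJ" using dJ has_derivative_bounded_linear by blast
  have lJ: "liouvilleJ J = (\<lambda>z W. snd z \<bullet> (J (fst z) *v fst W))"
    by (intro ext) (simp add: liouvilleJ_def inner_vec_def matrix_vector_mult_def sum_distrib_left mult.assoc)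
  have d1: "((\<lambda>z. J (fst z)) has_derivative (\<lambda>V. DJ (fst V))) (at (x, p))"
    using has_derivative_compose[OF has_derivative_fst[OF has_derivative_ident, of "at (x,p)"], of J DJ] dJ
    by simp
  have d2: "((\<lambda>z. J (fst z) *v w) has_derivative (\<lambda>V. DJ (fst V) *v w)) (at (x, p))" for w
    using bounded_linear.has_derivative[OF bl_mv d1] .
  have d3: "((\<lambda>z. snd z \<bullet> (J (fst z) *v w)) has_derivative
      (\<lambda>V. p \<bullet> (DJ (fst V) *v w) + snd V \<bullet> (J x *v w))) (at (x, p))" for w
    using has_derivative_inner[OF has_derivative_snd[OF has_derivative_ident] d2[of w]] by simp
  have fd: "frechet_derivative (\<lambda>z. snd z \<bullet> (J (fst z) *v w)) (at (x, p))
      = (\<lambda>V. p \<bullet> (DJ (fst V) *v w) + snd V \<bullet> (J x *v w))" for w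
    using frechet_derivative_at[OF d3[of w]] by simp
  have ed: "ext_d (liouvilleJ J) (x, p) V W = p \<bullet> (DJ (fst V) *v fst W) + snd V \<bullet> (J x *v fst W)
      - (p \<bullet> (DJ (fst W) *v fst V) + snd W \<bullet> (J x *v fst V))" for V W
    unfolding ext_d_def lJ fd ..
  have key: "\<forall>V W. ext_d (liouvilleJ J) (x, p) V W = omega_st (x, p) (J x *v fst V, cJ J DJ x p V) W"
  proof (intro allI)
    fix V W :: "(real^'n) \<times> (real^'n)"
    show "ext_d (liouvilleJ J) (x, p) V W = omega_st (x, p) (J x *v fst V, cJ J DJ x p V) W"
    proof -
      have "cJ J DJ x p V \<bullet> fst W = snd V \<bullet> (J x *v fst W) + p \<bullet> (DJ (fst V) *v fst W) - p \<bullet> (DJ (fst W) *v fst V)"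
        unfolding cJ_def inner_diff_left inner_add_left S1 S2 S3[OF bl] ..
      then show ?thesis unfolding ed omega_eq by simp
    qed
  qed
  have "Jc J (x, p) = (\<lambda>V. (J x *v fst V, cJ J DJ x p V))"
    unfolding Jc_def
  proof (rule the_equality)
    show "\<forall>V W. ext_d (liouvilleJ J) (x, p) V W = omega_st (x, p) ((\<lambda>V. (J x *v fst V, cJ J DJ x p V)) V) W"
      using key by simp
  next
    fix A assume A: "\<forall>V W. ext_d (liouvilleJ J) (x, p) V W = omega_st (x, p) (A V) W"
    show "A = (\<lambda>V. (J x *v fst V, cJ J DJ x p V))"
    proof
      fix V show "A V = (J x *v fst V, cJ J DJ x p V)"
        by (rule omega_inj[where z="(x, p)"]) (metis A key)
    qed
  qed
  then show ?thesis by simp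
qed

lemma sum_axis: "(\<Sum>a\<in>UNIV. f a * axis i (1::real) $ a) = f i"
  by (simp add: axis_def if_distrib[of "\<lambda>t. _ * t"] sum.delta' cong: if_cong)

lemma sum_axis': "(\<Sum>a\<in>UNIV. axis i (1::real) $ a * f a) = f i"
  by (simp add: axis_def if_distrib[of "\<lambda>t. t * _"] sum.delta' cong: if_cong)

lemma mv_axis: "(M *v axis j (1::real)) $ k = M $ k $ j"
  by (simp add: matrix_vector_mult_def sum_axis)

lemma cov_coord: "cov_vf Gam x (axis i 1) (coordvf j) $ k = Gam x k i j"
  unfolding coordvf_def cov_vf_const
  by (simp add: sum_axis sum_axis' mult.commute mult.left_commute sum_distrib_left[symmetric])

lemma torsion_eq: "torsion Gam x k i j = Gam x k i j - Gam x k j i"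
  unfolding torsion_def by (simp add: cov_coord)

lemma tilde_sym: "tilde_conn Gam x k i j = tilde_conn Gam x k j i"
  unfolding tilde_conn_def torsion_eq by (simp add: algebra_simps)

lemma nablaJ_eq:
  fixes J :: "real^'n \<Rightarrow> real^'n^'n"
  assumes dJ: "(J has_derivative DJ) (at x)"
  shows "nablaJ Gam J x k i j = DJ (axis i 1) $ k $ j + (\<Sum>b\<in>UNIV. Gam x k i b * J x $ b $ j)
     - (\<Sum>b\<in>UNIV. J x $ k $ b * Gam x b i j)"
proof -
  have "((\<lambda>y. J y *v axis j 1) has_derivative (\<lambda>v. DJ v *v axis j 1)) (at x)"
    using bounded_linear.has_derivative[OF bl_mv dJ] .
  then have fd: "frechet_derivative (\<lambda>y. J y *v coordvf j y) (at x) = (\<lambda>v. DJ v *v axis j 1)"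
    unfolding coordvf_def by (rule frechet_derivative_at[symmetric])
  have c1: "cov_vf Gam x (axis i 1) (\<lambda>y. J y *v coordvf j y) $ k
      = DJ (axis i 1) $ k $ j + (\<Sum>b\<in>UNIV. Gam x k i b * J x $ b $ j)"
    unfolding cov_vf_def fd
    by (simp add: mv_axis coordvf_def sum_axis sum_axis' mult.commute mult.left_commute sum_distrib_left[symmetric] cong: sum.cong)
  have c2: "(J x *v cov_vf Gam x (axis i 1) (coordvf j)) $ k = (\<Sum>b\<in>UNIV. J x $ k $ b * Gam x b i j)"
    by (simp add: matrix_vector_mult_def cov_coord)
  show ?thesis unfolding nablaJ_def using c1 c2 by simp
qed

theorem corollary2p7:
  fixes U :: "(real^'n) set"
    and J :: "real^'n \<Rightarrow> real^'n^'n"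
    and Gam :: "real^'n \<Rightarrow> 'n \<Rightarrow> 'n \<Rightarrow> 'n \<Rightarrow> real"
    and x p :: "real^'n"
    and V :: "(real^'n) \<times> (real^'n)"
  assumes "open U"
    and "smooth_on U J"
    and "\<forall>y\<in>U. J y ** J y = - mat 1"
    and "\<forall>k i j. smooth_on U (\<lambda>y. Gam y k i j)"
    and "x \<in> U"
  shows "JH Gam J (x, p) V = JG (tilde_conn Gam) U J x p V"
proof -
  define DJ where "DJ = frechet_derivative J (at x)"
  have dJ: "(J has_derivative DJ) (at x)"
    unfolding DJ_def using smooth_diff[OF assms(2) assms(5)] frechet_derivative_works by blast
  have bl: "bounded_linear DJ" using dJ has_derivative_bounded_linear by blast
  obtain X P where V: "V = (X, P)" by (cases V)
  define G where "G = tilde_conn Gam"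
  define Jm where "Jm = J x"
  define D where "D = (\<lambda>l. DJ (axis l 1))"
  have Gs: "G x k i j = G x k j i" for k i j unfolding G_def by (rule tilde_sym)
  define R where "R = bracketJ G J x"
  have Rl: "R k i l = - D i $ k $ l - (\<Sum>b\<in>UNIV. G x k i b * Jm $ b $ l)
        + D l $ k $ i + (\<Sum>b\<in>UNIV. G x k l b * Jm $ b $ i)" for k i l
  proof -
    have "(\<Sum>b\<in>UNIV. Jm $ k $ b * G x b i l) = (\<Sum>b\<in>UNIV. Jm $ k $ b * G x b l i)"
      using Gs by simp
    then show ?thesis
      unfolding R_def bracketJ_def nablaJ_eq[OF dJ] D_def Jm_def by simp
  qed
  have snd_eq: "(cJ J DJ x p V + snd (gamma_op R (x, p) V)) $ l
      = (gp G x p (Jm *v X) + transpose Jm *v (P - gp G x p X)) $ l" for l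
  proof -
    define A where "A = (\<Sum>i\<in>UNIV. \<Sum>k\<in>UNIV. p $ k * D i $ k $ l * X $ i)"
    define B where "B = (\<Sum>i\<in>UNIV. \<Sum>k\<in>UNIV. p $ k * D l $ k $ i * X $ i)"
    define E where "E = (\<Sum>i\<in>UNIV. \<Sum>k\<in>UNIV. p $ k * (\<Sum>b\<in>UNIV. G x k i b * Jm $ b $ l) * X $ i)"
    define F where "F = (\<Sum>i\<in>UNIV. \<Sum>k\<in>UNIV. p $ k * (\<Sum>b\<in>UNIV. G x k l b * Jm $ b $ i) * X $ i)"
    have gam: "snd (gamma_op R (x, p) V) $ l = - A - E + B + F"
      unfolding gamma_op_def V A_def B_def E_def F_def Rl
      by (simp add: algebra_simps sum.distrib sum_subtractf sum_negf)
    have cJl: "cJ J DJ x p V $ l = (transpose Jm *v P) $ l + (\<Sum>k\<in>UNIV. p $ k * DJ X $ k $ l)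
        - (\<Sum>k\<in>UNIV. p $ k * (\<Sum>i\<in>UNIV. D l $ k $ i * X $ i))"
      unfolding cJ_def V Jm_def D_def by simp
    have hA: "A = (\<Sum>k\<in>UNIV. p $ k * DJ X $ k $ l)"
    proof -
      have "A = (\<Sum>k\<in>UNIV. \<Sum>i\<in>UNIV. p $ k * D i $ k $ l * X $ i)" unfolding A_def by (rule sum.swap)
      also have "\<dots> = (\<Sum>k\<in>UNIV. p $ k * DJ X $ k $ l)"
        unfolding D_def lin_expand[OF bl, of X] by (simp add: sum_distrib_left mult_ac)
      finally show ?thesis .
    qed
    have hB: "B = (\<Sum>k\<in>UNIV. p $ k * (\<Sum>i\<in>UNIV. D l $ k $ i * X $ i))"
    proof -
      have "B = (\<Sum>k\<in>UNIV. \<Sum>i\<in>UNIV. p $ k * D l $ k $ i * X $ i)" unfolding B_def by (rule sum.swap)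
      then show ?thesis by (simp add: sum_distrib_left mult_ac)
    qed
    have hE: "E = (transpose Jm *v gp G x p X) $ l"
    proof -
      have "(transpose Jm *v gp G x p X) $ l = (\<Sum>b\<in>UNIV. \<Sum>i\<in>UNIV. \<Sum>k\<in>UNIV. p $ k * G x k i b * Jm $ b $ l * X $ i)"
        by (simp add: matrix_vector_mult_def transpose_def gp_def sum_distrib_left mult_ac)
      also have "\<dots> = (\<Sum>i\<in>UNIV. \<Sum>k\<in>UNIV. \<Sum>b\<in>UNIV. p $ k * G x k i b * Jm $ b $ l * X $ i)"
        by (rule sum3_rot)
      also have "\<dots> = E" unfolding E_def by (simp add: sum_distrib_left sum_distrib_right mult_ac)
      finally show ?thesis ..
    qed
    have hF: "F = gp G x p (Jm *v X) $ l"
    proof -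
      have "F = (\<Sum>b\<in>UNIV. \<Sum>k\<in>UNIV. \<Sum>i\<in>UNIV. p $ k * G x k i l * Jm $ i $ b * X $ b)"
        unfolding F_def by (simp add: sum_distrib_left sum_distrib_right mult_ac Gs[of _ l])
      also have "\<dots> = (\<Sum>i\<in>UNIV. \<Sum>k\<in>UNIV. \<Sum>b\<in>UNIV. p $ k * G x k i l * Jm $ i $ b * X $ b)"
        by (rule sum3_swap)
      also have "\<dots> = gp G x p (Jm *v X) $ l"
        by (simp add: gp_def matrix_vector_mult_def sum_distrib_left mult_ac)
      finally show ?thesis .
    qed
    show ?thesis
      unfolding vector_add_component vector_minus_component matrix_vector_mult_diff_distrib cJl gam hA[symmetric] hB[symmetric] hE hF
      by linarith
  qed
  have "JH Gam J (x, p) V = (Jm *v X, cJ J DJ x p V + snd (gamma_op R (x, p) V))"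
    unfolding JH_def Jc_eq[OF dJ] R_def G_def Jm_def V by (simp add: gamma_op_def)
  also have "\<dots> = (Jm *v X, gp G x p (Jm *v X) + transpose Jm *v (P - gp G x p X))"
    using snd_eq by (simp add: vec_eq_iff)
  also have "\<dots> = JG (tilde_conn Gam) U J x p V"
    unfolding V G_def Jm_def JG_eq[OF assms(1) assms(5)] ..
  finally show ?thesis .
qed

end
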